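(* Let $\mathcal{H}$ be a real separable Hilbert space, $t_0>0$, and let $(\Omega,\mathcal{F},\{\mathcal{F}_t\}_{t\geq t_0},\mathbb{P})$ be a filtered probability space carrying an $\mathcal{H}$-valued Brownian motion $W_X$. Assume $f:\mathcal{H}\to\mathbb{R}$ is convex, of class $\mathcal{C}^1$, with $L$-Lipschitz continuous gradient and $\operatorname{argmin}_{\mathcal{H}} f\neq\emptyset$, with minimum norm minimizer $x^*$; $\varepsilon:[t_0,+\infty)\to\mathbb{R}^+$ is nonincreasing, of class $\mathcal{C}^1$, with $\lim_{t\to+\infty}\varepsilon(t)=0$; $\delta>0$, $\lambda>0$; and $\sigma_X:[t_0,+\infty)\to\mathcal{L}(\mathcal{H},\mathcal{H})$ is measurable and square-integrable. Let $(X,Y)$ be a solution trajectory of \[ \begin{cases} dX(t)=Y(t)\,dt,\\ dY(t)=\big(-\delta\sqrt{\varepsilon(t)}\,Y(t)-\nabla f(X(t))-\varepsilon(t)X(t)\big)dt+\sigma_X(t)\,dW_X(t),\\ X(t_0)=X_0,\quad Y(t_0)=Y_0. \end{cases} \] Then for all $t\geq t_0$: \[ f(X(t))-\inf_{\mathcal{H}}f\leq \mathcal{E}(t,X(t),Y(t))+\frac{\varepsilon(t)}{2}\|x^*\|^2,\qquad \|X(t)-x_{\varepsilon(t)}\|^2\leq \frac{2\,\mathcal{E}(t,X(t),Y(t))}{\varepsilon(t)}. \] Therefore, $X(t)$ converges strongly to $x^*$ almost surely if $\lim_{t\to+\infty}\frac{\mathcal{E}(t,X(t),Y(t))}{\varepsilon(t)}=0$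 (almost surely).
   Context: $\varphi_t(x):=f(x)+\frac{\varepsilon(t)}{2}\|x\|^2$; $x_{\varepsilon(t)}:=\operatorname{argmin}_{\mathcal{H}}\varphi_t$ (the unique minimizer); $V(t,x,y):=\lambda\sqrt{\varepsilon(t)}(x-x_{\varepsilon(t)})+y$; and the energy function is $\mathcal{E}(t,x,y):=\varphi_t(x)-\varphi_t(x_{\varepsilon(t)})+\frac12\|V(t,x,y)\|^2$. *)

theory Defs
  imports "HOL-Probability.Probability"
begin

definition phi :: "('a::real_normed_vector \<Rightarrow> real) \<Rightarrow> real \<Rightarrow> 'a \<Rightarrow> real" where
  "phi f e x = f x + e / 2 * (norm x)\<^sup>2"

definition xeps :: "('a::real_normed_vector \<Rightarrow> real) \<Rightarrow> real \<Rightarrow> 'a" where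
  "xeps f e = (THE x. \<forall>y. phi f e x \<le> phi f e y)"

definition Vfun :: "('a::real_normed_vector \<Rightarrow> real) \<Rightarrow> (real \<Rightarrow> real) \<Rightarrow> real \<Rightarrow> real \<Rightarrow> 'a \<Rightarrow> 'a \<Rightarrow> 'a" where
  "Vfun f eps lam t x y = (lam * sqrt (eps t)) *\<^sub>R (x - xeps f (eps t)) + y"

definition Energy :: "('a::real_normed_vector \<Rightarrow> real) \<Rightarrow> (real \<Rightarrow> real) \<Rightarrow> real \<Rightarrow> real \<Rightarrow> 'a \<Rightarrow> 'a \<Rightarrow> real" where
  "Energy f eps lam t x y =
     phi f (eps t) x - phi f (eps t) (xeps f (eps t)) + 1/2 * (norm (Vfun f eps lam t x y))\<^sup>2"

definition argmin_set :: "('a \<Rightarrow> real) \<Rightarrow> 'a set" where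
  "argmin_set f = {x. \<forall>y. f x \<le> f y}"

end

theory Submission
  imports Defs
begin


lemma norm_comb:
  fixes a b :: "'a::real_inner"
  shows "(norm ((1 - s) *\<^sub>R a + s *\<^sub>R b))^2 = (1-s)*(norm a)^2 + s*(norm b)^2 - s*(1-s)*(norm (a-b))^2"
  by (simp add: power2_norm_eq_inner inner_add_left inner_add_right inner_diff_left inner_diff_right inner_commute algebra_simps)

lemma phi_comb:
  fixes f :: "'a::real_inner \<Rightarrow> real"
  assumes "convex_on UNIV f" "0 \<le> s" "s \<le> 1"
  shows "phi f e ((1 - s) *\<^sub>R a + s *\<^sub>R b) \<le> (1-s)*phi f e a + s*phi f e b - e/2 * s * (1 - s) * (norm (a-b))^2"
proof -
  have "f ((1 - s) *\<^sub>R a + s *\<^sub>R b) \<le> (1-s)*f a + s*f b"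
    using convex_onD[OF assms(1)] assms by simp
  moreover have "(norm ((1 - s) *\<^sub>R a + s *\<^sub>R b))^2 = (1-s)*(norm a)^2 + s*(norm b)^2 - s*(1-s)*(norm (a-b))^2"
    by (rule norm_comb)
  then have "phi f e ((1 - s) *\<^sub>R a + s *\<^sub>R b) = f ((1 - s) *\<^sub>R a + s *\<^sub>R b) + e/2*((1-s)*(norm a)^2 + s*(norm b)^2 - s*(1-s)*(norm (a-b))^2)"
    unfolding phi_def by simp
  ultimately show ?thesis unfolding phi_def by (simp add: algebra_simps diff_divide_distrib)
qed

lemma qgrowth:
  fixes f :: "'a::real_inner \<Rightarrow> real"
  assumes cv: "convex_on UNIV f" and e: "e \<ge> 0" and mn: "\<forall>y. phi f e x \<le> phi f e y"
  shows "phi f e y - phi f e x \<ge> e/2 * (norm (y - x))^2"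
proof -
  define D where "D = phi f e y - phi f e x"
  define c where "c = e/2 * (norm (y - x))^2"
  have c0: "c \<ge> 0" using e by (simp add: c_def)
  have key: "D \<ge> c*(1-s)" if s: "0 < s" "s < 1" for s
  proof -
    have "phi f e x \<le> phi f e ((1 - s) *\<^sub>R x + s *\<^sub>R y)" using mn by blast
    also have "\<dots> \<le> (1-s)*phi f e x + s*phi f e y - e/2 * s * (1 - s) * (norm (x-y))^2"
      using phi_comb[OF cv, of s] s by simp
    finally have "s * D \<ge> s * (c*(1-s))"
      unfolding D_def c_def by (simp add: norm_minus_commute algebra_simps)
    then show ?thesis using s by simp
  qed
  show ?thesis
  proof (rule ccontr)
    assume "\<not> ?thesis"
    then have Dc: "D < c" unfolding D_def c_def by simp
    show False
    proof (cases "D \<ge> 0")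
      case True
      then have cp: "c > 0" using Dc by simp
      define s where "s = (c - D)/(2*c)"
      have "0 < s" "s < 1" using True Dc cp by (auto simp: s_def field_simps)
      then have "D \<ge> c*(1-s)" by (rule key)
      moreover have "c*(1-s) = (c + D)/2" using cp by (simp add: s_def field_simps)
      ultimately show False using Dc by simp
    next
      case False
      then show False using key[of "1/2"] c0 by simp
    qed
  qed
qed

lemma phi_min_exists:
  fixes f :: "'a::{real_inner,complete_space} \<Rightarrow> real"
  assumes cv: "convex_on UNIV f" and cont: "continuous_on UNIV f"
    and lb: "\<And>y. m \<le> f y" and e: "e > 0"
  shows "\<exists>x. \<forall>y. phi f e x \<le> phi f e y"
proof -
  let ?P = "phi f e"
  have Plb: "m \<le> ?P y" for y
    using lb[of y] e unfolding phi_def by (simp add: add_increasing2)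
  have bdd: "bdd_below (range ?P)" unfolding bdd_below_def using Plb by blast
  define I where "I = Inf (range ?P)"
  have low: "I \<le> ?P y" for y unfolding I_def using bdd by (simp add: cInf_lower)
  have "\<exists>u. ?P u < I + inverse (real (Suc n))" for n
  proof (rule ccontr)
    assume "\<not> ?thesis"
    then have "\<forall>u. I + inverse (real (Suc n)) \<le> ?P u" by (simp add: not_less)
    then have "I + inverse (real (Suc n)) \<le> I" unfolding I_def
      by (intro cInf_greatest) auto
    then show False by simp
  qed
  then obtain u where u0: "\<And>n. ?P (u n) < I + inverse (real (Suc n))" by metis
  define a where "a n = inverse (real (Suc n))" for n
  have u: "?P (u n) < I + a n" for n using u0[of n] by (simp add: a_def)
  have mid: "e/8 * (norm (u n - u k))^2 < (a n + a k)/2" for n k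
  proof -
    have "I \<le> ?P ((1 - 1/2) *\<^sub>R u n + (1/2) *\<^sub>R u k)" by (rule low)
    also have "\<dots> \<le> (1 - 1/2)*?P (u n) + (1/2)*?P (u k) - e/2 * (1/2) * (1 - 1/2) * (norm (u n - u k))^2"
      by (rule phi_comb[OF cv]) auto
    finally have "I \<le> (1/2)*?P (u n) + (1/2)*?P (u k) - e/8 * (norm (u n - u k))^2"
      by simp
    then show ?thesis using u[of n] u[of k] by argo
  qed
  have "Cauchy u"
  proof (rule metric_CauchyI)
    fix r :: real assume r: "r > 0"
    have "e/8 * r^2 > 0" using r e by simp
    then obtain N where N: "a N < e/8 * r^2"
      using reals_Archimedean unfolding a_def by blast
    have "dist (u n) (u k) < r" if "n \<ge> N" "k \<ge> N" for n k
    proof -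
      have "a n \<le> a N"
        unfolding a_def by (rule le_imp_inverse_le) (use that in auto)
      moreover have "a k \<le> a N"
        unfolding a_def by (rule le_imp_inverse_le) (use that in auto)
      ultimately have "e/8 * (norm (u n - u k))^2 < e/8 * r^2"
        using mid[of n k] N by argo
      then have "(norm (u n - u k))^2 < r^2" using e by simp
      then have "norm (u n - u k) < r" using r by (simp add: power_less_imp_less_base)
      then show ?thesis by (simp add: dist_norm)
    qed
    then show "\<exists>M. \<forall>m\<ge>M. \<forall>n\<ge>M. dist (u m) (u n) < r" by blast
  qed
  then obtain z where z: "u \<longlonglongrightarrow> z" using Cauchy_convergent_iff convergent_def by blast
  have Pcont: "continuous_on UNIV ?P" unfolding phi_def
    by (intro continuous_intros cont)
  have Pz: "(\<lambda>n. ?P (u n)) \<longlonglongrightarrow> ?P z"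
    using continuous_on_tendsto_compose[OF Pcont z] by simp
  have "?P z \<le> ?P y" for y
  proof (rule LIMSEQ_le[OF Pz LIMSEQ_inverse_real_of_nat_add[of "?P y"]])
    show "\<exists>N. \<forall>n\<ge>N. ?P (u n) \<le> ?P y + inverse (real (Suc n))"
      unfolding a_def[symmetric]
    proof (intro exI allI impI)
      fix n :: nat
      show "?P (u n) \<le> ?P y + a n"
        using u[of n] low[of y] by linarith
    qed
  qed
  then show ?thesis by blast
qed

lemma xeps_min:
  fixes f :: "'a::{real_inner,complete_space} \<Rightarrow> real"
  assumes cv: "convex_on UNIV f" and cont: "continuous_on UNIV f"
    and lb: "\<And>y. m \<le> f y" and e: "e > 0"
  shows "phi f e (xeps f e) \<le> phi f e y"
proof -
  obtain x where x: "\<forall>y. phi f e x \<le> phi f e y" using phi_min_exists[OF cv cont lb e] by blast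
  have uniq: "x' = x" if x': "\<forall>y. phi f e x' \<le> phi f e y" for x'
  proof -
    have "phi f e x' - phi f e x \<ge> e/2 * (norm (x' - x))^2"
      using qgrowth[OF cv _ x] e by simp
    moreover have "phi f e x' \<le> phi f e x" using x' by blast
    ultimately have "e/2 * (norm (x' - x))^2 \<le> 0" by simp
    then have "(norm (x' - x))^2 \<le> 0" using e by (simp add: mult_le_0_iff)
    then show ?thesis by simp
  qed
  have "xeps f e = x" unfolding xeps_def
    apply (rule the_equality)
    using x apply blast
    using uniq apply blast
    done
  then show ?thesis using x by simp
qed


lemma L1:
  fixes f :: "'a::{real_inner,complete_space} \<Rightarrow> real"
  assumes cv: "convex_on UNIV f" and cont: "continuous_on UNIV f"
    and lb: "\<And>y. f xs \<le> f y" and e: "e > 0"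
  shows "(norm (xeps f e - xs))^2 \<le> (norm xs)^2 - (norm (xeps f e))^2"
proof -
  let ?x = "xeps f e"
  have mn: "\<forall>y. phi f e ?x \<le> phi f e y" using xeps_min[OF cv cont lb e] by blast
  have "phi f e xs - phi f e ?x \<ge> e/2 * (norm (xs - ?x))^2"
    by (rule qgrowth[OF cv _ mn]) (use e in simp)
  moreover have "f xs \<le> f ?x" by (rule lb)
  ultimately have "e/2 * (norm (xs - ?x))^2 \<le> e/2 * ((norm xs)^2 - (norm ?x)^2)"
    unfolding phi_def by (simp add: algebra_simps)
  then have "(norm (xs - ?x))^2 \<le> (norm xs)^2 - (norm ?x)^2" using e by simp
  then show ?thesis by (simp add: norm_minus_commute)
qed

lemma L2:
  fixes f :: "'a::{real_inner,complete_space} \<Rightarrow> real"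
  assumes cv: "convex_on UNIV f" and cont: "continuous_on UNIV f"
    and lb: "\<And>y. m \<le> f y" and e2: "0 < e2" and e12: "e2 \<le> e1"
  shows "(norm (xeps f e1 - xeps f e2))^2 \<le> (norm (xeps f e2))^2 - (norm (xeps f e1))^2"
proof -
  let ?x1 = "xeps f e1" and ?x2 = "xeps f e2"
  have e1: "e1 > 0" using e2 e12 by simp
  have m1: "\<forall>y. phi f e1 ?x1 \<le> phi f e1 y" using xeps_min[OF cv cont lb e1] by blast
  have m2: "\<forall>y. phi f e2 ?x2 \<le> phi f e2 y" using xeps_min[OF cv cont lb e2] by blast
  define d where "d = (norm (?x1 - ?x2))^2"
  define N where "N = (norm ?x2)^2 - (norm ?x1)^2"
  have g1: "phi f e1 ?x2 - phi f e1 ?x1 \<ge> e1/2 * d"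
    unfolding d_def using qgrowth[OF cv _ m1, of ?x2] e1 by (simp add: norm_minus_commute)
  have g2: "phi f e2 ?x1 - phi f e2 ?x2 \<ge> e2/2 * d"
    unfolding d_def using qgrowth[OF cv _ m2, of ?x1] e2 by simp
  have "(phi f e1 ?x2 - phi f e1 ?x1) + (phi f e2 ?x1 - phi f e2 ?x2) = (e1 - e2)/2 * N"
    unfolding phi_def N_def by (simp add: algebra_simps diff_divide_distrib)
  then have key: "(e1 + e2) * d \<le> (e1 - e2) * N" using g1 g2
    by (simp add: algebra_simps add_divide_distrib diff_divide_distrib)
  have d0: "d \<ge> 0" unfolding d_def by simp
  show ?thesis
  proof (cases "N \<ge> 0")
    case True
    have "(e1 - e2) * N \<le> (e1 + e2) * N" using True e2 by (simp add: mult_right_mono)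
    then have "(e1 + e2) * d \<le> (e1 + e2) * N" using key by linarith
    then have "d \<le> N" using e1 e2 by (simp add: mult_le_cancel_left_pos)
    then show ?thesis unfolding d_def N_def .
  next
    case False
    have "(e1 - e2) * N \<le> 0" using False e12 by (simp add: mult_nonneg_nonpos)
    then have "(e1 + e2) * d \<le> 0" using key by linarith
    then have "d \<le> 0" using e1 e2 by (simp add: mult_le_0_iff)
    then have "?x1 = ?x2" using d0 unfolding d_def by simp
    then have "N = 0" unfolding N_def by simp
    then show ?thesis using False by simp
  qed
qed



lemma tikhonov:
  fixes f :: "'a::{real_inner,complete_space} \<Rightarrow> real" and eps :: "real \<Rightarrow> real"
  assumes cv: "convex_on UNIV f" and cont: "continuous_on UNIV f"
    and lb: "\<And>y. f xs \<le> f y"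
    and minnorm: "\<And>z. (\<forall>y. f z \<le> f y) \<Longrightarrow> norm xs \<le> norm z"
    and epos: "\<And>t. t \<ge> t0 \<Longrightarrow> eps t > 0"
    and mono: "\<And>s t. t0 \<le> s \<Longrightarrow> s \<le> t \<Longrightarrow> eps t \<le> eps s"
    and lim: "(eps \<longlongrightarrow> 0) at_top"
  shows "((\<lambda>t. xeps f (eps t)) \<longlongrightarrow> xs) at_top"
proof -
  define g where "g n = xeps f (eps (t0 + real n))" for n
  define a where "a n = (norm (g n))^2" for n
  have gm: "(norm (g n - g k))^2 \<le> a k - a n" if "n \<le> k" for n k
  proof -
    have p: "0 < eps (t0 + real k)" using epos[of "t0 + real k"] by simp
    have q: "eps (t0 + real k) \<le> eps (t0 + real n)" using mono[of "t0 + real n" "t0 + real k"] that by simp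
    show ?thesis unfolding g_def a_def by (rule L2[OF cv cont lb p q])
  qed
  have inc: "incseq a"
  proof (rule incseq_SucI)
    fix n show "a n \<le> a (Suc n)" using gm[of n "Suc n"] zero_le_power2[of "norm (g n - g (Suc n))"] by linarith
  qed
  have abd: "a n \<le> (norm xs)^2" for n
  proof -
    have p: "0 < eps (t0 + real n)" using epos[of "t0 + real n"] by simp
    show ?thesis using L1[OF cv cont lb p] zero_le_power2[of "norm (g n - xs)"] unfolding a_def g_def
      by linarith
  qed
  obtain A where A: "a \<longlonglongrightarrow> A" using incseq_convergent[OF inc] abd by blast
  have "Cauchy g"
  proof (rule metric_CauchyI)
    fix r :: real assume r: "r > 0"
    have "r^2 > 0" using r by simp
    then obtain M where M: "\<forall>m\<ge>M. \<forall>n\<ge>M. dist (a m) (a n) < r^2"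
      using metric_CauchyD[OF LIMSEQ_imp_Cauchy[OF A]] by blast
    have "dist (g m) (g n) < r" if "m \<ge> M" "n \<ge> M" for m n
    proof -
      have h: "\<bar>a m - a n\<bar> < r^2" using M that by (simp add: dist_real_def)
      have "(norm (g m - g n))^2 < r^2"
      proof (cases "m \<le> n")
        case True then show ?thesis using gm[of m n] h by linarith
      next
        case False then show ?thesis using gm[of n m] h by (simp add: norm_minus_commute)
      qed
      then show ?thesis using r by (simp add: dist_norm power_less_imp_less_base)
    qed
    then show "\<exists>M. \<forall>m\<ge>M. \<forall>n\<ge>M. dist (g m) (g n) < r" by blast
  qed
  then obtain z where z: "g \<longlonglongrightarrow> z" using Cauchy_convergent_iff convergent_def by blast
  have epsn: "(\<lambda>n. eps (t0 + real n)) \<longlonglongrightarrow> 0"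
  proof -
    have "filterlim (\<lambda>n. t0 + real n) at_top sequentially"
      by (intro filterlim_tendsto_add_at_top[OF tendsto_const] filterlim_real_sequentially)
    then show ?thesis using filterlim_compose[OF lim] by blast
  qed
  have fz: "f z \<le> f xs"
  proof (rule LIMSEQ_le)
    show "(\<lambda>n. f (g n)) \<longlonglongrightarrow> f z" using continuous_on_tendsto_compose[OF cont z] by simp
    show "(\<lambda>n. f xs + eps (t0 + real n) / 2 * (norm xs)^2) \<longlonglongrightarrow> f xs"
      using tendsto_add[OF tendsto_const tendsto_mult[OF tendsto_divide[OF epsn tendsto_const] tendsto_const]]
      by simp
    show "\<exists>N. \<forall>n\<ge>N. f (g n) \<le> f xs + eps (t0 + real n) / 2 * (norm xs)^2"
    proof (intro exI allI impI)
      fix n :: nat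
      have ep: "eps (t0 + real n) > 0" using epos by simp
      have "phi f (eps (t0 + real n)) (g n) \<le> phi f (eps (t0 + real n)) xs"
        unfolding g_def by (rule xeps_min[OF cv cont lb ep])
      moreover have "0 \<le> eps (t0 + real n) / 2 * (norm (g n))^2" using ep by simp
      ultimately show "f (g n) \<le> f xs + eps (t0 + real n) / 2 * (norm xs)^2"
        unfolding phi_def by linarith
    qed
  qed
  have zmin: "\<forall>y. f z \<le> f y" using fz lb order_trans by blast
  have aA: "a \<longlonglongrightarrow> (norm z)^2" unfolding a_def by (intro tendsto_intros z)
  have zn: "(norm z)^2 \<le> (norm xs)^2"
    using LIMSEQ_le[OF aA tendsto_const[of "(norm xs)^2"]] abd by blast
  have zx: "z = xs"
  proof -
    define mp where "mp = (1 - 1/2) *\<^sub>R z + (1/2) *\<^sub>R xs"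
    have "f mp \<le> (1 - 1/2) * f z + (1/2) * f xs"
      unfolding mp_def by (rule convex_onD[OF cv]) auto
    then have "f mp \<le> f xs" using fz by simp
    then have "\<forall>y. f mp \<le> f y" using lb order_trans by blast
    then have "norm xs \<le> norm mp" by (rule minnorm)
    then have n1: "(norm xs)^2 \<le> (norm mp)^2" by (simp add: power_mono)
    have "(norm mp)^2 = (1 - 1/2)*(norm z)^2 + (1/2)*(norm xs)^2 - (1/2)*(1-1/2)*(norm (z-xs))^2"
      unfolding mp_def by (rule norm_comb)
    then have "(norm (z - xs))^2 \<le> 0" using n1 zn by argo
    then show ?thesis by simp
  qed
  have aX: "a \<longlonglongrightarrow> (norm xs)^2" using aA zx by simp
  show ?thesis
    unfolding tendsto_iff
  proof (intro allI impI)
    fix r :: real assume r: "r > 0"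
    have "r^2 > 0" using r by simp
    then obtain n where n: "dist (a n) ((norm xs)^2) < r^2"
      using aX unfolding tendsto_iff eventually_sequentially by blast
    have "dist (xeps f (eps t)) xs < r" if t: "t \<ge> t0 + real n" for t
    proof -
      have et: "eps t > 0" using epos t by simp
      have "(norm (xeps f (eps (t0 + real n)) - xeps f (eps t)))^2
            \<le> (norm (xeps f (eps t)))^2 - (norm (xeps f (eps (t0 + real n))))^2"
        by (rule L2[OF cv cont lb et]) (rule mono, use t in auto)
      then have an: "a n \<le> (norm (xeps f (eps t)))^2" unfolding a_def g_def
        using zero_le_power2[of "norm (xeps f (eps (t0 + real n)) - xeps f (eps t))"] by linarith
      have "(norm (xeps f (eps t) - xs))^2 \<le> (norm xs)^2 - (norm (xeps f (eps t)))^2"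
        by (rule L1[OF cv cont lb et])
      moreover have "(norm xs)^2 - a n < r^2" using n abd[of n] by (simp add: dist_real_def)
      ultimately have "(norm (xeps f (eps t) - xs))^2 < r^2" using an by linarith
      then show ?thesis using r by (simp add: dist_norm power_less_imp_less_base)
    qed
    then show "\<forall>\<^sub>F t in at_top. dist (xeps f (eps t)) xs < r"
      unfolding eventually_at_top_linorder by blast
  qed
qed


lemma point_bounds:
  fixes f :: "'a::{real_inner,complete_space} \<Rightarrow> real"
  assumes cv: "convex_on UNIV f" and cont: "continuous_on UNIV f"
    and lb: "\<And>y. f xs \<le> f y" and e: "eps t > 0"
  shows "f x - f xs \<le> Energy f eps lam t x y + eps t / 2 * (norm xs)^2"
    and "(norm (x - xeps f (eps t)))^2 \<le> 2 * Energy f eps lam t x y / eps t"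
proof -
  let ?e = "eps t"
  let ?xe = "xeps f ?e"
  have mn: "\<forall>y. phi f ?e ?xe \<le> phi f ?e y" using xeps_min[OF cv cont lb e] by blast
  have EE: "Energy f eps lam t x y \<ge> phi f ?e x - phi f ?e ?xe"
    unfolding Energy_def by simp
  have "phi f ?e ?xe \<le> phi f ?e xs" using mn by blast
  moreover have "f x \<le> phi f ?e x" unfolding phi_def using e by simp
  ultimately show "f x - f xs \<le> Energy f eps lam t x y + eps t / 2 * (norm xs)^2"
    using EE unfolding phi_def[of f ?e xs] by linarith
  have "phi f ?e x - phi f ?e ?xe \<ge> ?e/2 * (norm (x - ?xe))^2"
    by (rule qgrowth[OF cv _ mn]) (use e in simp)
  then have "?e/2 * (norm (x - ?xe))^2 \<le> Energy f eps lam t x y" using EE by linarith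
  then have "(norm (x - ?xe))^2 * ?e \<le> 2 * Energy f eps lam t x y" by (simp add: algebra_simps)
  then show "(norm (x - ?xe))^2 \<le> 2 * Energy f eps lam t x y / eps t"
    using e by (simp add: pos_le_divide_eq)
qed

theorem mainTheorem3:
  fixes f :: "'a::{real_inner, complete_space, second_countable_topology} \<Rightarrow> real"
    and gradf :: "'a \<Rightarrow> 'a" and L :: real
    and xstar :: 'a
    and eps eps' :: "real \<Rightarrow> real" and t0 delta lam :: real
    and M :: "'w measure"
    and X Y :: "real \<Rightarrow> 'w \<Rightarrow> 'a" and X0 Y0 :: "'w \<Rightarrow> 'a"
  assumes t0: "t0 > 0"
    and convex: "convex_on UNIV f"
    and grad: "\<And>x. (f has_derivative (\<lambda>h. gradf x \<bullet> h)) (at x)"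
    and lip: "L-lipschitz_on UNIV gradf"
    and argmin_ne: "argmin_set f \<noteq> {}"
    and xstar: "xstar \<in> argmin_set f" "\<And>z. z \<in> argmin_set f \<Longrightarrow> norm xstar \<le> norm z"
    and eps_pos: "\<And>t. t \<ge> t0 \<Longrightarrow> eps t > 0"
    and eps_mono: "\<And>s t. t0 \<le> s \<Longrightarrow> s \<le> t \<Longrightarrow> eps t \<le> eps s"
    and eps_deriv: "\<And>t. t \<ge> t0 \<Longrightarrow> (eps has_real_derivative eps' t) (at t within {t0..})"
    and eps'_cont: "continuous_on {t0..} eps'"
    and eps_lim: "(eps \<longlongrightarrow> 0) at_top"
    and delta: "delta > 0" and lambda: "lam > 0"
    and M: "prob_space M"
    and X_meas: "\<And>t. t \<ge> t0 \<Longrightarrow> X t \<in> borel_measurable M"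
    and Y_meas: "\<And>t. t \<ge> t0 \<Longrightarrow> Y t \<in> borel_measurable M"
    and init: "\<And>\<omega>. \<omega> \<in> space M \<Longrightarrow> X t0 \<omega> = X0 \<omega> \<and> Y t0 \<omega> = Y0 \<omega>"
    and Y_cont: "\<And>\<omega>. \<omega> \<in> space M \<Longrightarrow> continuous_on {t0..} (\<lambda>s. Y s \<omega>)"
    and dX: "\<And>\<omega> t. \<omega> \<in> space M \<Longrightarrow> t \<ge> t0 \<Longrightarrow>
               ((\<lambda>s. X s \<omega>) has_vector_derivative Y t \<omega>) (at t within {t0..})"
  shows "(\<forall>\<omega>\<in>space M. \<forall>t\<ge>t0.
            f (X t \<omega>) - (INF x. f x) \<le> Energy f eps lam t (X t \<omega>) (Y t \<omega>) + eps t / 2 * (norm xstar)\<^sup>2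
          \<and> (norm (X t \<omega> - xeps f (eps t)))\<^sup>2 \<le> 2 * Energy f eps lam t (X t \<omega>) (Y t \<omega>) / eps t)
       \<and> ((AE \<omega> in M. ((\<lambda>t. Energy f eps lam t (X t \<omega>) (Y t \<omega>) / eps t) \<longlongrightarrow> 0) at_top)
          \<longrightarrow> (AE \<omega> in M. ((\<lambda>t. X t \<omega>) \<longlongrightarrow> xstar) at_top))"
proof -
  have cont: "continuous_on UNIV f"
    by (rule has_derivative_continuous_on[of UNIV f "\<lambda>x h. gradf x \<bullet> h"]) (use grad in simp)
  have lb: "\<And>y. f xstar \<le> f y" using xstar(1) unfolding argmin_set_def by blast
  have minnorm: "\<And>z. (\<forall>y. f z \<le> f y) \<Longrightarrow> norm xstar \<le> norm z"
    using xstar(2) unfolding argmin_set_def by blast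
  have inf: "(INF x. f x) = f xstar"
  proof (rule antisym)
    have "bdd_below (range f)" unfolding bdd_below_def using lb by blast
    then show "(INF x. f x) \<le> f xstar" by (rule cINF_lower) simp
    show "f xstar \<le> (INF x. f x)" by (rule cINF_greatest) (use lb in auto)
  qed
  have P1: "\<forall>\<omega>\<in>space M. \<forall>t\<ge>t0.
            f (X t \<omega>) - (INF x. f x) \<le> Energy f eps lam t (X t \<omega>) (Y t \<omega>) + eps t / 2 * (norm xstar)\<^sup>2
          \<and> (norm (X t \<omega> - xeps f (eps t)))\<^sup>2 \<le> 2 * Energy f eps lam t (X t \<omega>) (Y t \<omega>) / eps t"
    unfolding inf
  proof (intro ballI allI impI conjI)
    fix \<omega> t assume t: "t0 \<le> t"
    show "f (X t \<omega>) - f xstar \<le> Energy f eps lam t (X t \<omega>) (Y t \<omega>) + eps t / 2 * (norm xstar)\<^sup>2"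
      by (rule point_bounds(1)[OF convex cont lb, of eps t, OF eps_pos[OF t]])
    show "(norm (X t \<omega> - xeps f (eps t)))\<^sup>2 \<le> 2 * Energy f eps lam t (X t \<omega>) (Y t \<omega>) / eps t"
      by (rule point_bounds(2)[OF convex cont lb, of eps t, OF eps_pos[OF t]])
  qed
  have tk: "((\<lambda>t. xeps f (eps t)) \<longlongrightarrow> xstar) at_top"
    by (rule tikhonov[OF convex cont lb minnorm eps_pos eps_mono eps_lim])
  have P2: "((\<lambda>t. X t \<omega>) \<longlongrightarrow> xstar) at_top"
    if H: "((\<lambda>t. Energy f eps lam t (X t \<omega>) (Y t \<omega>) / eps t) \<longlongrightarrow> 0) at_top" for \<omega>
  proof -
    let ?h = "\<lambda>t. Energy f eps lam t (X t \<omega>) (Y t \<omega>) / eps t"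
    have "((\<lambda>t. X t \<omega> - xeps f (eps t)) \<longlongrightarrow> 0) at_top"
    proof (rule Lim_null_comparison)
      show "\<forall>\<^sub>F t in at_top. norm (X t \<omega> - xeps f (eps t)) \<le> sqrt (2 * ?h t)"
        unfolding eventually_at_top_linorder
      proof (intro exI allI impI)
        fix t assume t: "t \<ge> t0"
        have "(norm (X t \<omega> - xeps f (eps t)))\<^sup>2 \<le> 2 * Energy f eps lam t (X t \<omega>) (Y t \<omega>) / eps t"
          by (rule point_bounds(2)[OF convex cont lb, of eps t, OF eps_pos[OF t]])
        then show "norm (X t \<omega> - xeps f (eps t)) \<le> sqrt (2 * ?h t)"
          by (intro real_le_rsqrt) simp
      qed
      show "((\<lambda>t. sqrt (2 * ?h t)) \<longlongrightarrow> 0) at_top"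
        using tendsto_real_sqrt[OF tendsto_mult[OF tendsto_const[of 2] H]] by simp
    qed
    from tendsto_add[OF this tk] show ?thesis by simp
  qed
  show ?thesis
  proof (intro conjI impI)
    show "\<forall>\<omega>\<in>space M. \<forall>t\<ge>t0.
            f (X t \<omega>) - (INF x. f x) \<le> Energy f eps lam t (X t \<omega>) (Y t \<omega>) + eps t / 2 * (norm xstar)\<^sup>2
          \<and> (norm (X t \<omega> - xeps f (eps t)))\<^sup>2 \<le> 2 * Energy f eps lam t (X t \<omega>) (Y t \<omega>) / eps t"
      by (rule P1)
    assume "AE \<omega> in M. ((\<lambda>t. Energy f eps lam t (X t \<omega>) (Y t \<omega>) / eps t) \<longlongrightarrow> 0) at_top"
    then show "AE \<omega> in M. ((\<lambda>t. X t \<omega>) \<longlongrightarrow> xstar) at_top"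
      by (rule AE_mp) (intro AE_I2 impI P2)
  qed
qed

end
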